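(* Let $S$ be a HeyVL program and let $S'$ be a subprogram obtained from $S$ by only removing (replacing by $\mathtt{skip}$) occurrences of statements that are extensive. Then $S'$ is a verification-witnessing slice of $S$ with respect to $(X,Y)$ for all expectations $X,Y$. Moreover, $\mathrm{vp}[S](Z)\succeq\mathrm{vp}[S'](Z)$ for every expectation $Z$.
   Context: Expectations are functions $X:\mathsf{States}\to[0,\infty]$ on program states, ordered pointwise ($\preceq$, with converse $\succeq$). HeyVL statements and their verification pre-expectation transformer $\mathrm{vp}[S]$ are: assignment $x :\approx p_1\cdot t_1+\dots+p_n\cdot t_n$ with $\mathrm{vp}(X)=\sum_i p_i X[x/t_i]$ (deterministic $x:=a$ gives $X[x/a]$); $\mathtt{reward}\ a$: $X+a$; $S_1;S_2$: $\mathrm{vp}[S_1](\mathrm{vp}[S_2](X))$; $\mathtt{if}(\sqcap)\{S_1\}\mathtt{else}\{S_2\}$ / $\mathtt{if}(\sqcup)\{S_1\}\mathtt{else}\{S_2\}$: pointwise min / max of $\mathrm{vp}[S_1](X),\mathrm{vp}[S_2](X)$; $\mathtt{assert}\ Y$: $\min(Y,X)$; $\mathtt{coassert}\ Y$: $\max(Y,X)$; $\mathtt{assume}\ Y$: $\infty$ where $Y\le X$, $X$ elsewhere; $\mathtt{coassume}\ Y$: $0$ where $Y\ge X$, $X$ elsewhere; $\mathtt{havoc}\ x$/$\mathtt{cohavoc}\ x$: pointwise inf/sup of $X$ over values of $x$; $\mathtt{validate}$: $\infty$ where $X=\infty$, else $0$; $\mathtt{covalidate}$: $0$ where $X=0$,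 else $\infty$. $\mathrm{vp}[\mathtt{skip}](X)=X$. A statement $S$ is extensive if $\mathrm{vp}[S](X)\succeq X$ for all $X$. Write $\models\{X\}S\{Y\}$ iff $X\preceq\mathrm{vp}[S](Y)$. A subprogram $P$ of $S$ is a verification-witnessing slice of $S$ w.r.t. $(X,Y)$ if $\models\{X\}P\{Y\}$ implies $\models\{X\}S\{Y\}$. *)

theory Defs
  imports "HOL-Library.Extended_Nonnegative_Real"
begin

type_synonym ('v,'d) state = "'v \<Rightarrow> 'd"
type_synonym ('v,'d) expectation = "('v,'d) state \<Rightarrow> ennreal"

(* HeyVL statements.  Assign x [(p1,t1),...,(pn,tn)] is  x :\<approx> p1\<cdot>t1 + ... + pn\<cdot>tn
   (a deterministic assignment x := a is Assign x [(\<lambda>_. 1, a)]). *)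
datatype ('v,'d) stmt =
    Assign 'v "((('v,'d) state \<Rightarrow> ennreal) \<times> (('v,'d) state \<Rightarrow> 'd)) list"
  | Reward "('v,'d) expectation"
  | Seq "('v,'d) stmt" "('v,'d) stmt"
  | IfDemonic "('v,'d) stmt" "('v,'d) stmt"
  | IfAngelic "('v,'d) stmt" "('v,'d) stmt"
  | Assert "('v,'d) expectation"
  | Coassert "('v,'d) expectation"
  | Assume "('v,'d) expectation"
  | Coassume "('v,'d) expectation"
  | Havoc 'v
  | Cohavoc 'v
  | Validate
  | Covalidate
  | Skip

primrec vp :: "('v,'d) stmt \<Rightarrow> ('v,'d) expectation \<Rightarrow> ('v,'d) expectation" where
  "vp (Assign x ps) X = (\<lambda>\<sigma>. sum_list (map (\<lambda>(p,t). p \<sigma> * X (\<sigma>(x := t \<sigma>))) ps))"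
| "vp (Reward a) X = (\<lambda>\<sigma>. X \<sigma> + a \<sigma>)"
| "vp (Seq S1 S2) X = vp S1 (vp S2 X)"
| "vp (IfDemonic S1 S2) X = (\<lambda>\<sigma>. min (vp S1 X \<sigma>) (vp S2 X \<sigma>))"
| "vp (IfAngelic S1 S2) X = (\<lambda>\<sigma>. max (vp S1 X \<sigma>) (vp S2 X \<sigma>))"
| "vp (Assert Y) X = (\<lambda>\<sigma>. min (Y \<sigma>) (X \<sigma>))"
| "vp (Coassert Y) X = (\<lambda>\<sigma>. max (Y \<sigma>) (X \<sigma>))"
| "vp (Assume Y) X = (\<lambda>\<sigma>. if Y \<sigma> \<le> X \<sigma> then \<infinity> else X \<sigma>)"
| "vp (Coassume Y) X = (\<lambda>\<sigma>. if Y \<sigma> \<ge> X \<sigma> then 0 else X \<sigma>)"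
| "vp (Havoc x) X = (\<lambda>\<sigma>. INF v. X (\<sigma>(x := v)))"
| "vp (Cohavoc x) X = (\<lambda>\<sigma>. SUP v. X (\<sigma>(x := v)))"
| "vp Validate X = (\<lambda>\<sigma>. if X \<sigma> = \<infinity> then \<infinity> else 0)"
| "vp Covalidate X = (\<lambda>\<sigma>. if X \<sigma> = 0 then 0 else \<infinity>)"
| "vp Skip X = X"

definition extensive :: "('v,'d) stmt \<Rightarrow> bool" where
  "extensive S \<longleftrightarrow> (\<forall>X. X \<le> vp S X)"

definition valid_triple :: "('v,'d) expectation \<Rightarrow> ('v,'d) stmt \<Rightarrow> ('v,'d) expectation \<Rightarrow> bool" where
  "valid_triple X S Y \<longleftrightarrow> X \<le> vp S Y"

definition vw_slice :: "('v,'d) stmt \<Rightarrow> ('v,'d) stmt \<Rightarrow> ('v,'d) expectation \<Rightarrow> ('v,'d) expectation \<Rightarrow> bool" where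
  "vw_slice P S X Y \<longleftrightarrow> (valid_triple X P Y \<longrightarrow> valid_triple X S Y)"

inductive remove_ext :: "('v,'d) stmt \<Rightarrow> ('v,'d) stmt \<Rightarrow> bool" where
  keep: "remove_ext S S"
| drop: "extensive S \<Longrightarrow> remove_ext S Skip"
| seq: "remove_ext S1 S1' \<Longrightarrow> remove_ext S2 S2' \<Longrightarrow> remove_ext (Seq S1 S2) (Seq S1' S2')"
| ifd: "remove_ext S1 S1' \<Longrightarrow> remove_ext S2 S2' \<Longrightarrow> remove_ext (IfDemonic S1 S2) (IfDemonic S1' S2')"
| ifa: "remove_ext S1 S1' \<Longrightarrow> remove_ext S2 S2' \<Longrightarrow> remove_ext (IfAngelic S1 S2) (IfAngelic S1' S2')"

end

theory Submission
  imports Defs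
begin

lemma vp_mono: "X \<le> Y \<Longrightarrow> vp S X \<le> vp S Y"
proof (induction S arbitrary: X Y)
  case (Assign x ps)
  show ?case
  proof (rule le_funI)
    fix \<sigma>
    show "vp (Assign x ps) X \<sigma> \<le> vp (Assign x ps) Y \<sigma>"
      unfolding vp.simps
    proof (induction ps)
      case Nil then show ?case by simp
    next
      case (Cons a ps)
      obtain p t where a: "a = (p,t)" by fastforce
      have "p \<sigma> * X (\<sigma>(x := t \<sigma>)) \<le> p \<sigma> * Y (\<sigma>(x := t \<sigma>))"
        using Assign.prems by (simp add: le_fun_def mult_left_mono)
      then show ?case using Cons.IH a
        by (simp only: list.map sum_list.Cons prod.case) (rule add_mono)
    qed
  qed
next
  case (Reward a) then show ?case by (auto simp: le_fun_def add_right_mono)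
next
  case (Seq S1 S2) then show ?case by simp
next
  case (IfDemonic S1 S2) then show ?case by (auto simp: le_fun_def min.coboundedI1 min.coboundedI2)
next
  case (IfAngelic S1 S2) then show ?case by (auto simp: le_fun_def max.coboundedI1 max.coboundedI2)
next
  case (Assert x) then show ?case by (auto simp: le_fun_def min.coboundedI1 min.coboundedI2)
next
  case (Coassert x) then show ?case by (auto simp: le_fun_def max.coboundedI1 max.coboundedI2)
next
  case (Assume x) then show ?case by (auto simp: le_fun_def intro: order_trans)
next
  case (Coassume x) then show ?case by (auto simp: le_fun_def intro: order_trans)
next
  case (Havoc x) then show ?case by (auto simp: le_fun_def intro!: INF_mono)
next
  case (Cohavoc x) then show ?case by (auto simp: le_fun_def intro!: SUP_mono)
next
  case Validate then show ?case
    by (auto simp: le_fun_def) (metis top.extremum_uniqueI)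
next
  case Covalidate then show ?case
    by (auto simp: le_fun_def) (metis le_zero_eq)
next
  case Skip then show ?case by simp
qed

lemma main: "remove_ext S S' \<Longrightarrow> vp S' Z \<le> vp S Z"
proof (induction arbitrary: Z rule: remove_ext.induct)
  case (keep S) then show ?case by simp
next
  case (drop S) then show ?case by (simp add: extensive_def)
next
  case (seq S1 S1' S2 S2')
  have "vp S1' (vp S2' Z) \<le> vp S1 (vp S2' Z)" by (rule seq.IH(1))
  also have "\<dots> \<le> vp S1 (vp S2 Z)" by (rule vp_mono[OF seq.IH(2)])
  finally show ?case by simp
next
  case (ifd S1 S1' S2 S2') then show ?case
    unfolding le_fun_def vp.simps by (blast intro: min.mono)
next
  case (ifa S1 S1' S2 S2') then show ?case
    unfolding le_fun_def vp.simps by (blast intro: max.mono)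
qed

theorem theorem3:
  fixes S S' :: "('v,'d) stmt"
  assumes "remove_ext S S'"
  shows "(\<forall>X Y. vw_slice S' S X Y) \<and> (\<forall>Z. vp S' Z \<le> vp S Z)"
  using main[OF assms] by (auto simp: vw_slice_def valid_triple_def intro: order_trans)

end
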